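(* Let $A,B$ be non-trivial finitely generated left-orderable groups. Then $G=A*B$ is Hucha with respect to the family consisting of $A$, $B$ and all cyclic subgroups of $G$.
   Context: A positive cone is a subsemigroup $P$ with $G=P\sqcup P^{-1}\sqcup\{1\}$. For a finite generating set $X$ with word metric $d_X$, an $r$-path is a sequence $g_0,\dots,g_n$ with $d_X(g_i,g_{i+1})\le r$; $S$ $r$-disconnects $H_1,H_2$ if every $r$-path from $H_1$ to $H_2$ meets $S$, and $r$-disconnects $P$ if it $r$-disconnects $\{u\},\{v\}$ for some $u,v\in P$. A negative swamp of width $r$ for a subgroup $H$ is $S\subseteq P^{-1}$ that $r$-disconnects $P$ and $r$-disconnects $g_1H,g_2H$ for some $g_1,g_2\in G$. A finitely generated left-orderable group $G$ is Hucha with respect to a family $\mathcal{H}$ of subgroups if for some (equivalently any) finite generating set, for every positive cone $P$, every $H\in\mathcal{H}$ and every $r>0$ there is a negative swamp of width $r$ for $H$. *)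

theory Defs
  imports "HOL-Algebra.Algebra"
begin

definition left_orderable :: "('a, 'b) monoid_scheme \<Rightarrow> bool" where
  "left_orderable G \<longleftrightarrow> (\<exists>less :: 'a \<Rightarrow> 'a \<Rightarrow> bool.
     (\<forall>x\<in>carrier G. \<not> less x x) \<and>
     (\<forall>x\<in>carrier G. \<forall>y\<in>carrier G. \<forall>z\<in>carrier G. less x y \<and> less y z \<longrightarrow> less x z) \<and>
     (\<forall>x\<in>carrier G. \<forall>y\<in>carrier G. x = y \<or> less x y \<or> less y x) \<and>
     (\<forall>g\<in>carrier G. \<forall>x\<in>carrier G. \<forall>y\<in>carrier G. less x y \<longrightarrow> less (g \<otimes>\<^bsub>G\<^esub> x) (g \<otimes>\<^bsub>G\<^esub> y)))"

definition finitely_generated :: "('a, 'b) monoid_scheme \<Rightarrow> bool" where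
  "finitely_generated G \<longleftrightarrow> (\<exists>Xg. finite Xg \<and> Xg \<subseteq> carrier G \<and> generate G Xg = carrier G)"

definition positive_cone :: "('a, 'b) monoid_scheme \<Rightarrow> 'a set \<Rightarrow> bool" where
  "positive_cone G P \<longleftrightarrow> P \<subseteq> carrier G \<and>
     (\<forall>x\<in>P. \<forall>y\<in>P. x \<otimes>\<^bsub>G\<^esub> y \<in> P) \<and>
     carrier G = P \<union> (m_inv G ` P) \<union> {\<one>\<^bsub>G\<^esub>} \<and>
     P \<inter> (m_inv G ` P) = {} \<and> \<one>\<^bsub>G\<^esub> \<notin> P \<and> \<one>\<^bsub>G\<^esub> \<notin> m_inv G ` P"

definition word_length :: "('a, 'b) monoid_scheme \<Rightarrow> 'a set \<Rightarrow> 'a \<Rightarrow> nat" where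
  "word_length G Xg g = (LEAST n. \<exists>xs. length xs = n \<and> set xs \<subseteq> Xg \<union> m_inv G ` Xg \<and>
       foldr (\<otimes>\<^bsub>G\<^esub>) xs \<one>\<^bsub>G\<^esub> = g)"

definition word_dist :: "('a, 'b) monoid_scheme \<Rightarrow> 'a set \<Rightarrow> 'a \<Rightarrow> 'a \<Rightarrow> nat" where
  "word_dist G Xg g h = word_length G Xg (inv\<^bsub>G\<^esub> g \<otimes>\<^bsub>G\<^esub> h)"

definition r_path :: "('a, 'b) monoid_scheme \<Rightarrow> 'a set \<Rightarrow> nat \<Rightarrow> 'a list \<Rightarrow> bool" where
  "r_path G Xg r ps \<longleftrightarrow> ps \<noteq> [] \<and> set ps \<subseteq> carrier G \<and>
     (\<forall>i. Suc i < length ps \<longrightarrow> word_dist G Xg (ps ! i) (ps ! Suc i) \<le> r)"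

definition r_disconnects :: "('a, 'b) monoid_scheme \<Rightarrow> 'a set \<Rightarrow> nat \<Rightarrow> 'a set \<Rightarrow> 'a set \<Rightarrow> 'a set \<Rightarrow> bool" where
  "r_disconnects G Xg r S H1 H2 \<longleftrightarrow>
     (\<forall>ps. r_path G Xg r ps \<and> hd ps \<in> H1 \<and> last ps \<in> H2 \<longrightarrow> set ps \<inter> S \<noteq> {})"

definition r_disconnects_cone :: "('a, 'b) monoid_scheme \<Rightarrow> 'a set \<Rightarrow> nat \<Rightarrow> 'a set \<Rightarrow> 'a set \<Rightarrow> bool" where
  "r_disconnects_cone G Xg r S P \<longleftrightarrow> (\<exists>u\<in>P. \<exists>v\<in>P. r_disconnects G Xg r S {u} {v})"

definition negative_swamp :: "('a, 'b) monoid_scheme \<Rightarrow> 'a set \<Rightarrow> 'a set \<Rightarrow> 'a set \<Rightarrow> nat \<Rightarrow> 'a set \<Rightarrow> bool" where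
  "negative_swamp G Xg P H r S \<longleftrightarrow> S \<subseteq> m_inv G ` P \<and> r_disconnects_cone G Xg r S P \<and>
     (\<exists>g1\<in>carrier G. \<exists>g2\<in>carrier G. r_disconnects G Xg r S (g1 <#\<^bsub>G\<^esub> H) (g2 <#\<^bsub>G\<^esub> H))"

definition hucha :: "('a, 'b) monoid_scheme \<Rightarrow> 'a set set \<Rightarrow> bool" where
  "hucha G F \<longleftrightarrow> (\<exists>Xg. finite Xg \<and> Xg \<subseteq> carrier G \<and> generate G Xg = carrier G \<and>
     (\<forall>P. positive_cone G P \<longrightarrow> (\<forall>H\<in>F. \<forall>r::nat. r > 0 \<longrightarrow> (\<exists>S. negative_swamp G Xg P H r S))))"

text \<open>G is the (internal) free product of its subgroups A and B: A and B generate G and every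
  nonempty alternating word of nontrivial letters from A and B (label True = letter from A)
  has nontrivial product (normal form theorem).\<close>
definition internal_free_product :: "('a, 'b) monoid_scheme \<Rightarrow> 'a set \<Rightarrow> 'a set \<Rightarrow> bool" where
  "internal_free_product G A B \<longleftrightarrow> subgroup A G \<and> subgroup B G \<and>
     generate G (A \<union> B) = carrier G \<and>
     (\<forall>ws :: (bool \<times> 'a) list. ws \<noteq> [] \<longrightarrow>
        (\<forall>w\<in>set ws. snd w \<noteq> \<one>\<^bsub>G\<^esub> \<and> (if fst w then snd w \<in> A else snd w \<in> B)) \<longrightarrow>
        (\<forall>i. Suc i < length ws \<longrightarrow> fst (ws ! i) \<noteq> fst (ws ! Suc i)) \<longrightarrow>
        foldr (\<otimes>\<^bsub>G\<^esub>) (map snd ws) \<one>\<^bsub>G\<^esub> \<noteq> \<one>\<^bsub>G\<^esub>)"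

end

theory Submission
  imports Defs
begin
fun altw :: "(bool \<times> 'x \<Rightarrow> bool) \<Rightarrow> (bool \<times> 'x) list \<Rightarrow> bool" where
  "altw P [] = True"
| "altw P [w] = P w"
| "altw P (w # v # ws) = (P w \<and> fst w \<noteq> fst v \<and> altw P (v # ws))"

lemma altw_Cons: "altw P (x # ys) \<longleftrightarrow> P x \<and> altw P ys \<and> (ys \<noteq> [] \<longrightarrow> fst x \<noteq> fst (hd ys))"
  by (cases ys) auto

lemma altw_append: "altw P (xs @ ys) \<longleftrightarrow> altw P xs \<and> altw P ys \<and> (xs \<noteq> [] \<longrightarrow> ys \<noteq> [] \<longrightarrow> fst (last xs) \<noteq> fst (hd ys))"
  by (induction xs) (auto simp: altw_Cons)

lemma altw_rev: "altw P (rev ws) \<longleftrightarrow> altw P ws"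
  by (induction ws) (auto simp: altw_Cons altw_append last_rev hd_rev)

lemma altw_map: "altw P ws \<Longrightarrow> (\<And>w. w \<in> set ws \<Longrightarrow> P w \<Longrightarrow> Q (g w)) \<Longrightarrow> (\<And>w. fst (g w) = fst w) \<Longrightarrow> altw Q (map g ws)"
  by (induction ws) (auto simp: altw_Cons hd_map)

lemma altw_iff: "altw P ws \<longleftrightarrow> (\<forall>w\<in>set ws. P w) \<and> (\<forall>i. Suc i < length ws \<longrightarrow> fst (ws!i) \<noteq> fst (ws ! Suc i))"
proof (induction ws)
  case Nil then show ?case by simp
next
  case (Cons x ys)
  show ?case
  proof (cases ys)
    case Nil then show ?thesis by simp
  next
    case (Cons y zs)
    have "(\<forall>i. Suc i < length (x # ys) \<longrightarrow> fst ((x # ys) ! i) \<noteq> fst ((x # ys) ! Suc i))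
      \<longleftrightarrow> fst x \<noteq> fst (hd ys) \<and> (\<forall>i. Suc i < length ys \<longrightarrow> fst (ys ! i) \<noteq> fst (ys ! Suc i))"
      (is "?L \<longleftrightarrow> ?R")
    proof
      assume L: ?L
      have 1: "fst x \<noteq> fst (hd ys)" using L[rule_format, of 0] Cons by simp
      have 2: "\<forall>i. Suc i < length ys \<longrightarrow> fst (ys ! i) \<noteq> fst (ys ! Suc i)"
        using L Cons by (metis Suc_mono length_Cons nth_Cons_Suc)
      show ?R using 1 2 by blast
    next
      assume R: ?R
      show ?L
      proof (intro allI impI)
        fix i assume "Suc i < length (x # ys)"
        then show "fst ((x # ys) ! i) \<noteq> fst ((x # ys) ! Suc i)"
          using R Cons by (cases i) auto
      qed
    qed
    then show ?thesis using Cons.IH by (simp add: altw_Cons local.Cons conj_commute conj_left_commute)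
  qed
qed

locale fpc = group G for G :: "'a monoid" (structure) +
  fixes A B :: "'a set"
  assumes ifp: "internal_free_product G A B"
begin

lemma subA: "subgroup A G" and subB: "subgroup B G" and genAB: "generate G (A \<union> B) = carrier G"
  using ifp unfolding internal_free_product_def by auto

definition fac :: "bool \<Rightarrow> 'a set" where "fac f = (if f then A else B)"
definition good :: "bool \<times> 'a \<Rightarrow> bool" where "good w \<longleftrightarrow> snd w \<noteq> \<one>\<^bsub>G\<^esub> \<and> snd w \<in> fac (fst w)"
definition prd :: "(bool \<times> 'a) list \<Rightarrow> 'a" where "prd ws = foldr (\<otimes>\<^bsub>G\<^esub>) (map snd ws) \<one>\<^bsub>G\<^esub>"

lemma sub_fac: "subgroup (fac f) G"
  using subA subB by (simp add: fac_def)

lemma fac_carrier: "x \<in> fac f \<Longrightarrow> x \<in> carrier G"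
  using subgroup.mem_carrier[OF sub_fac] by blast

lemma good_carrier: "good w \<Longrightarrow> snd w \<in> carrier G"
  using fac_carrier good_def by blast

lemma prd_Nil[simp]: "prd [] = \<one>" and prd_Cons[simp]: "prd (w # ws) = snd w \<otimes> prd ws"
  by (simp_all add: prd_def)

lemma prd_closed: "(\<forall>w\<in>set ws. snd w \<in> carrier G) \<Longrightarrow> prd ws \<in> carrier G"
  by (induction ws) auto

lemma prd_append: "(\<forall>w\<in>set xs. snd w \<in> carrier G) \<Longrightarrow> (\<forall>w\<in>set ys. snd w \<in> carrier G) \<Longrightarrow>
   prd (xs @ ys) = prd xs \<otimes> prd ys"
  by (induction xs) (auto simp: m_assoc prd_closed)

lemma altw_carrier: "altw good ws \<Longrightarrow> \<forall>w\<in>set ws. snd w \<in> carrier G"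
  using altw_iff good_carrier by blast

lemma nontriv: "ws \<noteq> [] \<Longrightarrow> altw good ws \<Longrightarrow> prd ws \<noteq> \<one>"
proof -
  assume a: "ws \<noteq> []" "altw good ws"
  have "\<forall>w\<in>set ws. snd w \<noteq> \<one> \<and> (if fst w then snd w \<in> A else snd w \<in> B)"
    using a(2) unfolding altw_iff good_def fac_def by auto
  moreover have "\<forall>i. Suc i < length ws \<longrightarrow> fst (ws ! i) \<noteq> fst (ws ! Suc i)"
    using a(2) unfolding altw_iff by auto
  ultimately show ?thesis using ifp a(1) unfolding internal_free_product_def prd_def by blast
qed

definition invrev :: "(bool \<times> 'a) list \<Rightarrow> (bool \<times> 'a) list" where
  "invrev ws = rev (map (\<lambda>w. (fst w, inv\<^bsub>G\<^esub> (snd w))) ws)"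

lemma invrev_altw: "altw good ws \<Longrightarrow> altw good (invrev ws)"
proof -
  assume a: "altw good ws"
  have "good (fst w, inv (snd w))" if "good w" for w
    using that fac_carrier subgroup.m_inv_closed[OF sub_fac] by (auto simp: good_def)
  then have "altw good (map (\<lambda>w. (fst w, inv (snd w))) ws)"
    using altw_map[of good ws good "\<lambda>w. (fst w, inv (snd w))"] a by auto
  then show ?thesis unfolding invrev_def altw_rev .
qed

lemma invrev_prd: "(\<forall>w\<in>set ws. snd w \<in> carrier G) \<Longrightarrow> prd (invrev ws) = inv (prd ws)"
proof (induction ws)
  case Nil then show ?case by (simp add: invrev_def)
next
  case (Cons x ws)
  have "invrev (x # ws) = invrev ws @ [(fst x, inv (snd x))]" by (simp add: invrev_def)
  moreover have "\<forall>w\<in>set (invrev ws). snd w \<in> carrier G" using Cons.prems by (auto simp: invrev_def)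
  ultimately have "prd (invrev (x # ws)) = prd (invrev ws) \<otimes> prd [(fst x, inv (snd x))]"
    using Cons.prems by (simp add: prd_append)
  then show ?case using Cons by (simp add: inv_mult_group prd_closed)
qed

lemma invrev_ne: "ws \<noteq> [] \<Longrightarrow> invrev ws \<noteq> []" by (simp add: invrev_def)
lemma invrev_last: "ws \<noteq> [] \<Longrightarrow> fst (last (invrev ws)) = fst (hd ws)"
  by (simp add: invrev_def last_rev hd_map)

definition LS :: "bool \<Rightarrow> 'a set" where
  "LS f = {x. \<exists>ws. ws \<noteq> [] \<and> altw good ws \<and> fst (hd ws) = f \<and> prd ws = x}"

lemma LS_carrier: "x \<in> LS f \<Longrightarrow> x \<in> carrier G"
  unfolding LS_def using prd_closed altw_carrier by blast

lemma one_notin_LS: "\<one> \<notin> LS f"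
  unfolding LS_def using nontriv by blast

lemma LS_disj: "x \<in> LS f \<Longrightarrow> x \<in> LS g \<Longrightarrow> f = g"
proof (rule ccontr)
  assume "x \<in> LS f" "x \<in> LS g" "f \<noteq> g"
  then obtain ws1 ws2 where w1: "ws1 \<noteq> []" "altw good ws1" "fst (hd ws1) = f" "prd ws1 = x"
    and w2: "ws2 \<noteq> []" "altw good ws2" "fst (hd ws2) = g" "prd ws2 = x"
    unfolding LS_def by blast
  let ?V = "invrev ws1 @ ws2"
  have "altw good ?V" using w1 w2 \<open>f \<noteq> g\<close>
    by (simp add: altw_append invrev_altw invrev_ne invrev_last)
  moreover have "?V \<noteq> []" using w2 by simp
  moreover have "prd ?V = \<one>"
  proof -
    have c1: "\<forall>w\<in>set ws1. snd w \<in> carrier G" "\<forall>w\<in>set ws2. snd w \<in> carrier G"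
      using w1 w2 altw_carrier by auto
    have "\<forall>w\<in>set (invrev ws1). snd w \<in> carrier G" using c1 by (auto simp: invrev_def)
    then have "prd ?V = inv x \<otimes> x" using c1 w1 w2 by (simp add: prd_append invrev_prd)
    moreover have "x \<in> carrier G" using c1 w1(4) prd_closed by blast
    ultimately show ?thesis by simp
  qed
  ultimately show False using nontriv by blast
qed

lemma LS_single: "a \<in> fac f \<Longrightarrow> a \<noteq> \<one> \<Longrightarrow> a \<in> LS f"
  unfolding LS_def
  by (rule CollectI, rule exI[of _ "[(f, a)]"]) (auto simp: good_def fac_carrier)

lemma LS_lmul: "y \<in> LS (\<not> f) \<Longrightarrow> a \<in> fac f \<Longrightarrow> a \<noteq> \<one> \<Longrightarrow> a \<otimes> y \<in> LS f"
proof -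
  assume "y \<in> LS (\<not> f)" "a \<in> fac f" "a \<noteq> \<one>"
  then obtain ws where w: "ws \<noteq> []" "altw good ws" "fst (hd ws) = (\<not> f)" "prd ws = y"
    unfolding LS_def by blast
  have "altw good ((f, a) # ws)" using w \<open>a \<in> fac f\<close> \<open>a \<noteq> \<one>\<close> by (simp add: altw_Cons good_def)
  moreover have "prd ((f, a) # ws) = a \<otimes> y" using w by simp
  ultimately show ?thesis unfolding LS_def by (intro CollectI exI[of _ "(f, a) # ws"]) auto
qed

lemma LS_rmul:
  assumes x: "x \<in> LS f" and s: "s \<in> fac g" and ne: "x \<otimes> s \<noteq> \<one>"
  shows "x \<otimes> s \<in> LS f"
proof -
  obtain ws where w: "ws \<noteq> []" "altw good ws" "fst (hd ws) = f" "prd ws = x"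
    using x unfolding LS_def by blast
  obtain ys w0 where yw: "ws = ys @ [w0]" using w(1) by (cases ws rule: rev_cases) auto
  have cy: "\<forall>w\<in>set ys. snd w \<in> carrier G" and cw0: "snd w0 \<in> carrier G"
    using altw_carrier[OF w(2)] yw by auto
  have sc: "s \<in> carrier G" using s fac_carrier by blast
  have aw: "altw good ys \<and> altw good [w0] \<and> (ys \<noteq> [] \<longrightarrow> fst (last ys) \<noteq> fst w0)"
    using w(2) unfolding yw altw_append by simp
  then have ays: "altw good ys" and gw0: "good w0" and lst: "ys \<noteq> [] \<longrightarrow> fst (last ys) \<noteq> fst w0"
    by auto
  have "prd ws = prd ys \<otimes> prd [w0]" unfolding yw using cy cw0 by (intro prd_append) auto
  then have xe: "x = prd ys \<otimes> snd w0" using w(4) cw0 by simp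
  have pyc: "prd ys \<in> carrier G" using cy prd_closed by blast
  show ?thesis
  proof (cases "s = \<one>")
    case True then show ?thesis using x LS_carrier by simp
  next
    case sne: False
    show ?thesis
    proof (cases "fst w0 = g")
      case True
      have "snd w0 \<in> fac g" using gw0 True good_def by auto
      then have as: "snd w0 \<otimes> s \<in> fac g" using s subgroup.m_closed[OF sub_fac] by blast
      show ?thesis
      proof (cases "snd w0 \<otimes> s = \<one>")
        case True
        have "x \<otimes> s = prd ys \<otimes> (snd w0 \<otimes> s)" using xe pyc cw0 sc by (simp add: m_assoc)
        then have e: "x \<otimes> s = prd ys" using True pyc by simp
        then have "ys \<noteq> []" using ne by auto
        then have "fst (hd ys) = f" using w(3) unfolding yw by simp
        then show ?thesis using e ays \<open>ys \<noteq> []\<close> unfolding LS_def by (intro CollectI exI[of _ ys]) simp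
      next
        case False
        let ?V = "ys @ [(g, snd w0 \<otimes> s)]"
        have gg: "good (g, snd w0 \<otimes> s)" using False as by (simp add: good_def)
        have "altw good ?V" unfolding altw_append using ays lst True gg by simp
        moreover have "fst (hd ?V) = f" using w(3) yw True by (cases ys) auto
        moreover have "prd ?V = prd ys \<otimes> prd [(g, snd w0 \<otimes> s)]"
          using cy as fac_carrier by (intro prd_append) auto
        then have "prd ?V = x \<otimes> s" using xe pyc cw0 sc by (simp add: m_assoc)
        ultimately show ?thesis unfolding LS_def by (intro CollectI exI[of _ ?V]) simp
      qed
    next
      case False
      let ?V = "ws @ [(g, s)]"
      have gg: "good (g, s)" using sne s by (simp add: good_def)
      have "fst (last ws) \<noteq> g" using yw False by simp
      then have "altw good ?V" unfolding altw_append using w(2) gg by simp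
      moreover have "fst (hd ?V) = f" using w(1,3) by simp
      moreover have "prd ?V = prd ws \<otimes> prd [(g, s)]"
        using altw_carrier[OF w(2)] sc by (intro prd_append) auto
      then have "prd ?V = x \<otimes> s" using w(4) sc by simp
      ultimately show ?thesis unfolding LS_def by (intro CollectI exI[of _ ?V]) simp
    qed
  qed
qed

lemma fac_cases: "s \<in> A \<union> B \<Longrightarrow> \<exists>g. s \<in> fac g"
  by (auto simp: fac_def)

lemma LS_cover: "x \<in> carrier G \<Longrightarrow> x = \<one> \<or> x \<in> LS True \<or> x \<in> LS False"
proof -
  let ?Q = "{\<one>} \<union> LS True \<union> LS False"
  have Qc: "y \<in> ?Q \<Longrightarrow> y \<in> carrier G" for y using LS_carrier by auto
  have step: "y \<in> ?Q \<Longrightarrow> s \<in> A \<union> B \<Longrightarrow> y \<otimes> s \<in> ?Q" for y s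
  proof -
    assume y: "y \<in> ?Q" and s: "s \<in> A \<union> B"
    obtain g where g: "s \<in> fac g" using fac_cases[OF s] by blast
    have sc: "s \<in> carrier G" using g fac_carrier by blast
    show ?thesis
    proof (cases "y = \<one>")
      case True
      then show ?thesis using LS_single[OF g] sc by (cases g; cases "s = \<one>") auto
    next
      case False
      then obtain f where "y \<in> LS f" using y by auto
      then show ?thesis using LS_rmul[OF _ g] by (cases f; cases "y \<otimes> s = \<one>") auto
    qed
  qed
  have "h \<in> generate G (A \<union> B) \<Longrightarrow> \<forall>y\<in>?Q. y \<otimes> h \<in> ?Q" for h
  proof (induction rule: generate.induct)
    case one then show ?case using Qc by simp
  next
    case (incl h) then show ?case using step by blast
  next
    case (inv h)
    then have "inv h \<in> A \<union> B" using subgroup.m_inv_closed[OF subA] subgroup.m_inv_closed[OF subB] by auto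
    then show ?case using step by blast
  next
    case (eng h1 h2)
    have hc: "h1 \<in> carrier G" "h2 \<in> carrier G" using eng.hyps genAB by auto
    show ?case
    proof
      fix y assume "y \<in> ?Q"
      then have "y \<otimes> h1 \<in> ?Q" using eng.IH by blast
      then have "(y \<otimes> h1) \<otimes> h2 \<in> ?Q" using eng.IH by blast
      then show "y \<otimes> (h1 \<otimes> h2) \<in> ?Q" using hc Qc[OF \<open>y \<in> ?Q\<close>] by (simp add: m_assoc)
    qed
  qed
  moreover assume "x \<in> carrier G"
  ultimately have "\<one> \<otimes> x \<in> ?Q" using genAB by blast
  then show ?thesis using \<open>x \<in> carrier G\<close> by auto
qed

lemma AB_inter: "a \<in> A \<Longrightarrow> a \<in> B \<Longrightarrow> a = \<one>"
  using LS_single[of a True] LS_single[of a False] LS_disj by (auto simp: fac_def)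

lemma LS_notin: "x \<in> LS (\<not> f) \<Longrightarrow> x \<notin> LS f"
  using LS_disj by fastforce

end

locale fpx = fpc +
  fixes Xg :: "'a set"
  assumes Xfin: "finite Xg" and Xsub: "Xg \<subseteq> carrier G" and XA: "Xg \<subseteq> A \<union> B"
    and Xgen: "generate G Xg = carrier G"
begin

abbreviation wl where "wl \<equiv> word_length G Xg"
abbreviation Lt where "Lt \<equiv> Xg \<union> m_inv G ` Xg"

lemma Lt_carrier: "Lt \<subseteq> carrier G" using Xsub by auto

lemma Lt_AB: "Lt \<subseteq> A \<union> B"
  using XA subgroup.m_inv_closed[OF subA] subgroup.m_inv_closed[OF subB] by auto

lemma fold_closed: "set xs \<subseteq> carrier G \<Longrightarrow> foldr (\<otimes>) xs \<one> \<in> carrier G"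
  by (induction xs) auto

lemma fold_append: "set xs \<subseteq> carrier G \<Longrightarrow> set ys \<subseteq> carrier G \<Longrightarrow>
  foldr (\<otimes>) (xs @ ys) \<one> = foldr (\<otimes>) xs \<one> \<otimes> foldr (\<otimes>) ys \<one>"
  by (induction xs) (auto simp: m_assoc fold_closed)

lemma fold_gen: "set xs \<subseteq> carrier G \<Longrightarrow> z \<in> carrier G \<Longrightarrow> foldr (\<otimes>) xs z = foldr (\<otimes>) xs \<one> \<otimes> z"
  by (induction xs) (auto simp: m_assoc fold_closed)

lemma word_exists: "x \<in> carrier G \<Longrightarrow> \<exists>xs. set xs \<subseteq> Lt \<and> foldr (\<otimes>) xs \<one> = x"
proof -
  assume "x \<in> carrier G"
  then have "x \<in> generate G Xg" using Xgen by simp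
  then show ?thesis
  proof (induction rule: generate.induct)
    case one then show ?case by (intro exI[of _ "[]"]) simp
  next
    case (incl h) then show ?case using Xsub by (intro exI[of _ "[h]"]) auto
  next
    case (inv h) then show ?case using Xsub by (intro exI[of _ "[inv h]"]) auto
  next
    case (eng h1 h2)
    then obtain xs1 xs2 where "set xs1 \<subseteq> Lt" "foldr (\<otimes>) xs1 \<one> = h1" "set xs2 \<subseteq> Lt" "foldr (\<otimes>) xs2 \<one> = h2"
      by blast
    moreover have "set xs1 \<subseteq> carrier G" "set xs2 \<subseteq> carrier G" using calculation Lt_carrier by auto
    ultimately show ?case using fold_gen[of xs1 "foldr (\<otimes>) xs2 \<one>"] fold_closed
      by (intro exI[of _ "xs1 @ xs2"]) auto
  qed
qed

lemma wl_ex: "x \<in> carrier G \<Longrightarrow> \<exists>xs. length xs = wl x \<and> set xs \<subseteq> Lt \<and> foldr (\<otimes>) xs \<one> = x"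
proof -
  assume "x \<in> carrier G"
  then obtain xs where "set xs \<subseteq> Lt \<and> foldr (\<otimes>) xs \<one> = x" using word_exists by blast
  then have "\<exists>n. \<exists>xs. length xs = n \<and> set xs \<subseteq> Lt \<and> foldr (\<otimes>) xs \<one> = x" by blast
  then show ?thesis unfolding word_length_def by (rule LeastI_ex)
qed

lemma wl_le: "set xs \<subseteq> Lt \<Longrightarrow> wl (foldr (\<otimes>) xs \<one>) \<le> length xs"
  unfolding word_length_def by (rule Least_le) blast

lemma wl_one: "wl \<one> = 0"
  using wl_le[of "[]"] by simp

lemma ball_fin: "finite {x \<in> carrier G. wl x \<le> R}"
proof -
  have "{x \<in> carrier G. wl x \<le> R} \<subseteq> (\<lambda>xs. foldr (\<otimes>) xs \<one>) ` {xs. set xs \<subseteq> Lt \<and> length xs \<le> R}"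
  proof
    fix x assume "x \<in> {x \<in> carrier G. wl x \<le> R}"
    then obtain xs where "length xs = wl x" "set xs \<subseteq> Lt" "foldr (\<otimes>) xs \<one> = x" "wl x \<le> R"
      using wl_ex by blast
    then show "x \<in> (\<lambda>xs. foldr (\<otimes>) xs \<one>) ` {xs. set xs \<subseteq> Lt \<and> length xs \<le> R}" by force
  qed
  moreover have "finite {xs. set xs \<subseteq> Lt \<and> length xs \<le> R}"
    using Xfin by (intro finite_lists_length_le) auto
  ultimately show ?thesis using finite_subset by blast
qed

lemma cut:
  assumes "c \<in> carrier G" "z \<in> carrier G" "inv c \<otimes> z \<in> LS True" "set xs \<subseteq> Lt"
  shows "inv c \<otimes> (z \<otimes> foldr (\<otimes>) xs \<one>) \<in> LS True \<or> (\<exists>k \<le> length xs. z \<otimes> foldr (\<otimes>) (take k xs) \<one> = c)"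
  using assms(2-4)
proof (induction xs arbitrary: z)
  case Nil then show ?case by simp
next
  case (Cons s rest)
  have sc: "s \<in> carrier G" and rc: "set rest \<subseteq> carrier G" using Cons.prems Lt_carrier by auto
  have fc: "foldr (\<otimes>) rest \<one> \<in> carrier G" using fold_closed rc by blast
  obtain g where g: "s \<in> fac g" using Cons.prems Lt_AB fac_cases by (meson list.set_intros(1) subsetD)
  show ?case
  proof (cases "inv c \<otimes> (z \<otimes> s) = \<one>")
    case True
    then have "z \<otimes> s = c" using assms(1) Cons.prems sc inv_solve_left[of \<one> c "z \<otimes> s"] by auto
    then show ?thesis using sc by (intro disjI2 exI[of _ 1]) auto
  next
    case False
    have "inv c \<otimes> (z \<otimes> s) = (inv c \<otimes> z) \<otimes> s" using assms(1) Cons.prems sc by (simp add: m_assoc)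
    then have "inv c \<otimes> (z \<otimes> s) \<in> LS True" using LS_rmul[OF Cons.prems(2) g] False by simp
    then have IH: "inv c \<otimes> ((z \<otimes> s) \<otimes> foldr (\<otimes>) rest \<one>) \<in> LS True \<or>
        (\<exists>k \<le> length rest. (z \<otimes> s) \<otimes> foldr (\<otimes>) (take k rest) \<one> = c)"
      using Cons.IH[of "z \<otimes> s"] Cons.prems sc by auto
    have e1: "(z \<otimes> s) \<otimes> foldr (\<otimes>) rest \<one> = z \<otimes> foldr (\<otimes>) (s # rest) \<one>"
      using Cons.prems sc fc by (simp add: m_assoc)
    show ?thesis
    proof (cases "inv c \<otimes> ((z \<otimes> s) \<otimes> foldr (\<otimes>) rest \<one>) \<in> LS True")
      case True then show ?thesis using e1 by simp
    next
      case False
      then obtain k where k: "k \<le> length rest" "(z \<otimes> s) \<otimes> foldr (\<otimes>) (take k rest) \<one> = c"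
        using IH by blast
      have "set (take k rest) \<subseteq> carrier G" using rc by (meson set_take_subset subset_trans)
      then have "z \<otimes> foldr (\<otimes>) (take (Suc k) (s # rest)) \<one> = c"
        using k Cons.prems sc fold_closed by (simp add: m_assoc)
      then show ?thesis using k by (intro disjI2 exI[of _ "Suc k"]) auto
    qed
  qed
qed

lemma cutdist:
  assumes "c \<in> carrier G" "x \<in> carrier G" "y \<in> carrier G"
    "inv c \<otimes> x \<in> LS True" "inv c \<otimes> y \<notin> LS True"
  shows "wl (inv x \<otimes> c) \<le> wl (inv x \<otimes> y)"
proof -
  obtain xs where xs: "length xs = wl (inv x \<otimes> y)" "set xs \<subseteq> Lt" "foldr (\<otimes>) xs \<one> = inv x \<otimes> y"
    using wl_ex[of "inv x \<otimes> y"] assms by blast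
  have "x \<otimes> (inv x \<otimes> y) = y" using assms by (simp add: m_assoc[symmetric])
  then obtain k where k: "k \<le> length xs" "x \<otimes> foldr (\<otimes>) (take k xs) \<one> = c"
    using cut[OF assms(1,2,4) xs(2)] xs(3) assms(5) by auto
  have st: "set (take k xs) \<subseteq> Lt" using xs(2) by (meson set_take_subset subset_trans)
  then have "foldr (\<otimes>) (take k xs) \<one> \<in> carrier G" using Lt_carrier fold_closed by blast
  then have "foldr (\<otimes>) (take k xs) \<one> = inv x \<otimes> c" using k(2) assms
    inv_solve_left[of "foldr (\<otimes>) (take k xs) \<one>" x c] by auto
  then have "wl (inv x \<otimes> c) \<le> length (take k xs)" using wl_le[OF st] by simp
  then show ?thesis using xs(1) k(1) by simp
qed

definition Sb :: "'a \<Rightarrow> nat \<Rightarrow> 'a set" where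
  "Sb c R = {z \<in> carrier G. wl (inv\<^bsub>G\<^esub> z \<otimes>\<^bsub>G\<^esub> c) \<le> R}"

lemma sep2:
  assumes "c \<in> carrier G" "x \<in> carrier G" "y \<in> carrier G"
    "inv c \<otimes> x \<in> LS True" "inv c \<otimes> y \<notin> LS True" "word_dist G Xg x y \<le> R"
  shows "x \<in> Sb c R"
  using cutdist[OF assms(1-5)] assms(2,6) unfolding Sb_def word_dist_def by simp

lemma r_path_tl: "r_path G Xg r (p # q # rest) \<Longrightarrow> r_path G Xg r (q # rest) \<and> word_dist G Xg p q \<le> r"
proof -
  assume a: "r_path G Xg r (p # q # rest)"
  have a1: "\<forall>i. Suc i < length (p # q # rest) \<longrightarrow> word_dist G Xg ((p # q # rest) ! i) ((p # q # rest) ! Suc i) \<le> r"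
    and a2: "set (p # q # rest) \<subseteq> carrier G" using a unfolding r_path_def by blast+
  have "word_dist G Xg p q \<le> r" using a1[rule_format, of 0] by simp
  moreover have "\<forall>i. Suc i < length (q # rest) \<longrightarrow> word_dist G Xg ((q # rest) ! i) ((q # rest) ! Suc i) \<le> r"
  proof (intro allI impI)
    fix i assume "Suc i < length (q # rest)"
    then show "word_dist G Xg ((q # rest) ! i) ((q # rest) ! Suc i) \<le> r" using a1[rule_format, of "Suc i"] by simp
  qed
  then have "r_path G Xg r (q # rest)" using a2 unfolding r_path_def by simp
  ultimately show ?thesis by blast
qed

lemma path_meets:
  assumes "c \<in> carrier G" "r \<le> R"
  shows "r_path G Xg r ps \<Longrightarrow> inv c \<otimes> hd ps \<in> LS True \<Longrightarrow> inv c \<otimes> last ps \<notin> LS True \<Longrightarrow> set ps \<inter> Sb c R \<noteq> {}"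
proof (induction ps)
  case Nil then show ?case by (simp add: r_path_def)
next
  case (Cons p rest)
  show ?case
  proof (cases rest)
    case Nil then show ?thesis using Cons.prems by simp
  next
    case (Cons q rest')
    have rp: "r_path G Xg r rest" "word_dist G Xg p q \<le> r" using r_path_tl Cons.prems(1) local.Cons by auto
    have pc: "p \<in> carrier G" "q \<in> carrier G" using Cons.prems(1) local.Cons unfolding r_path_def by auto
    show ?thesis
    proof (cases "inv c \<otimes> q \<in> LS True")
      case True
      then have "set rest \<inter> Sb c R \<noteq> {}" using Cons.IH rp Cons.prems local.Cons by simp
      then show ?thesis by auto
    next
      case False
      then have "p \<in> Sb c R" using sep2[OF assms(1) pc, of R] Cons.prems rp assms(2) by simp
      then show ?thesis by auto
    qed
  qed
qed

lemma disc:
  assumes "c \<in> carrier G" "r \<le> R"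
    "\<forall>x\<in>H1. inv c \<otimes> x \<in> LS True \<or> x \<in> Sb c R"
    "\<forall>y\<in>H2. inv c \<otimes> y \<notin> LS True \<or> y \<in> Sb c R"
  shows "r_disconnects G Xg r (Sb c R) H1 H2"
  unfolding r_disconnects_def
proof (intro allI impI)
  fix ps assume a: "r_path G Xg r ps \<and> hd ps \<in> H1 \<and> last ps \<in> H2"
  then have ne: "ps \<noteq> []" by (simp add: r_path_def)
  show "set ps \<inter> Sb c R \<noteq> {}"
  proof (cases "hd ps \<in> Sb c R \<or> last ps \<in> Sb c R")
    case True then show ?thesis using ne by (metis disjoint_iff hd_in_set last_in_set)
  next
    case False
    then show ?thesis using path_meets[OF assms(1,2)] a assms(3,4) by blast
  qed
qed

lemma side_const:
  assumes Y: "Y \<subseteq> carrier G" and YR: "\<forall>y\<in>Y. wl y \<le> R \<and> wl (inv y) \<le> R"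
    and x: "x \<in> carrier G" and avoid: "\<forall>h\<in>generate G Y. x \<otimes> h \<notin> Sb \<one> R"
  shows "h \<in> generate G Y \<Longrightarrow> \<forall>h0\<in>generate G Y. (x \<otimes> h0 \<otimes> h \<in> LS True \<longleftrightarrow> x \<otimes> h0 \<in> LS True)"
proof -
  let ?H = "generate G Y"
  have sg: "subgroup ?H G" using generate_is_subgroup[OF Y] .
  have Hc: "h \<in> ?H \<Longrightarrow> h \<in> carrier G" for h using subgroup.mem_carrier[OF sg] .
  have letter: "x \<otimes> h0 \<otimes> t \<in> LS True \<longleftrightarrow> x \<otimes> h0 \<in> LS True"
    if t: "t \<in> ?H" "wl t \<le> R" "wl (inv t) \<le> R" and h0: "h0 \<in> ?H" for t h0
  proof -
    let ?p = "x \<otimes> h0" and ?q = "x \<otimes> h0 \<otimes> t"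
    have pc: "?p \<in> carrier G" and tc: "t \<in> carrier G" using x Hc h0 t by auto
    have qc: "?q \<in> carrier G" using pc tc by simp
    have pn: "?p \<notin> Sb \<one> R" using avoid h0 by blast
    have "?q = x \<otimes> (h0 \<otimes> t)" using x Hc[OF h0] tc by (simp add: m_assoc)
    moreover have "h0 \<otimes> t \<in> ?H" using subgroup.m_closed[OF sg h0 t(1)] .
    ultimately have qn: "?q \<notin> Sb \<one> R" using avoid by metis
    have d1: "word_dist G Xg ?p ?q \<le> R" unfolding word_dist_def using pc tc t(2)
      by (simp add: m_assoc[symmetric])
    have "inv ?q \<otimes> ?p = inv t" using pc tc by (simp add: inv_mult_group m_assoc)
    then have d2: "word_dist G Xg ?q ?p \<le> R" unfolding word_dist_def using t(3) by simp
    show ?thesis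
    proof
      assume "?q \<in> LS True"
      show "?p \<in> LS True"
      proof (rule ccontr)
        assume "?p \<notin> LS True"
        then have "?q \<in> Sb \<one> R" using sep2[of \<one> ?q ?p R] qc pc d2 \<open>?q \<in> LS True\<close> by simp
        then show False using qn by blast
      qed
    next
      assume "?p \<in> LS True"
      show "?q \<in> LS True"
      proof (rule ccontr)
        assume "?q \<notin> LS True"
        then have "?p \<in> Sb \<one> R" using sep2[of \<one> ?p ?q R] qc pc d1 \<open>?p \<in> LS True\<close> by simp
        then show False using pn by blast
      qed
    qed
  qed
  assume "h \<in> ?H"
  then show ?thesis
  proof (induction rule: generate.induct)
    case one then show ?case using x Hc by simp
  next
    case (incl h)
    then show ?case using letter YR generate.incl[OF incl.hyps] by blast
  next
    case (inv h)
    have "h \<in> carrier G" using inv.hyps Y by auto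
    have ih: "inv h \<in> ?H" using generate.inv[where G=G, OF inv.hyps] .
    have "wl (inv h) \<le> R" "wl (inv (inv h)) \<le> R" using YR inv.hyps \<open>h \<in> carrier G\<close> by auto
    then show ?case using letter[OF ih] by blast
  next
    case (eng h1 h2)
    show ?case
    proof
      fix h0 assume h0: "h0 \<in> ?H"
      have c: "h0 \<in> carrier G" "h1 \<in> carrier G" "h2 \<in> carrier G" using h0 eng.hyps Hc by auto
      have "h0 \<otimes> h1 \<in> ?H" using subgroup.m_closed[OF sg h0 eng.hyps(1)] .
      then have "x \<otimes> (h0 \<otimes> h1) \<otimes> h2 \<in> LS True \<longleftrightarrow> x \<otimes> (h0 \<otimes> h1) \<in> LS True" using eng.IH(2) by blast
      moreover have "x \<otimes> h0 \<otimes> h1 \<in> LS True \<longleftrightarrow> x \<otimes> h0 \<in> LS True" using eng.IH(1) h0 by blast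
      moreover have "x \<otimes> (h0 \<otimes> h1) \<otimes> h2 = x \<otimes> h0 \<otimes> (h1 \<otimes> h2)" "x \<otimes> (h0 \<otimes> h1) = x \<otimes> h0 \<otimes> h1"
        using c x by (simp_all add: m_assoc)
      ultimately show "x \<otimes> h0 \<otimes> (h1 \<otimes> h2) \<in> LS True \<longleftrightarrow> x \<otimes> h0 \<in> LS True" by simp
    qed
  qed
qed

end

lemma (in group) sub_pow_closed: "subgroup H G \<Longrightarrow> h \<in> H \<Longrightarrow> h [^] (n::nat) \<in> H"
  by (induction n) (auto simp: subgroup.one_closed subgroup.m_closed)

locale fpP = fpx +
  fixes P :: "'a set"
  assumes cone: "positive_cone G P" and Ant: "A \<noteq> {\<one>}" and Bnt: "B \<noteq> {\<one>}"
begin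

definition lt :: "'a \<Rightarrow> 'a \<Rightarrow> bool" where "lt x y \<longleftrightarrow> inv\<^bsub>G\<^esub> x \<otimes>\<^bsub>G\<^esub> y \<in> P"

lemma P_sub: "P \<subseteq> carrier G" and P_mult: "x \<in> P \<Longrightarrow> y \<in> P \<Longrightarrow> x \<otimes> y \<in> P"
  and P_cover: "carrier G = P \<union> (m_inv G ` P) \<union> {\<one>}" and one_notP: "\<one> \<notin> P"
  using cone unfolding positive_cone_def by auto

lemma lt_trans: "x \<in> carrier G \<Longrightarrow> y \<in> carrier G \<Longrightarrow> z \<in> carrier G \<Longrightarrow> lt x y \<Longrightarrow> lt y z \<Longrightarrow> lt x z"
proof -
  assume c: "x \<in> carrier G" "y \<in> carrier G" "z \<in> carrier G" and "lt x y" "lt y z"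
  then have "(inv x \<otimes> y) \<otimes> (inv y \<otimes> z) \<in> P" unfolding lt_def using P_mult by blast
  moreover have "(inv x \<otimes> y) \<otimes> (inv y \<otimes> z) = inv x \<otimes> z" using c by (simp add: m_assoc[symmetric])
      (simp add: m_assoc)
  ultimately show ?thesis unfolding lt_def by simp
qed

lemma lt_irrefl: "x \<in> carrier G \<Longrightarrow> \<not> lt x x"
  unfolding lt_def using one_notP by simp

lemma lt_left: "g \<in> carrier G \<Longrightarrow> x \<in> carrier G \<Longrightarrow> y \<in> carrier G \<Longrightarrow> lt (g \<otimes> x) (g \<otimes> y) \<longleftrightarrow> lt x y"
proof -
  assume c: "g \<in> carrier G" "x \<in> carrier G" "y \<in> carrier G"
  then have "inv (g \<otimes> x) \<otimes> (g \<otimes> y) = inv x \<otimes> y"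
    by (simp add: inv_mult_group m_assoc) (simp add: m_assoc[symmetric])
  then show ?thesis unfolding lt_def by simp
qed

lemma lt_total: "x \<in> carrier G \<Longrightarrow> y \<in> carrier G \<Longrightarrow> x \<noteq> y \<Longrightarrow> lt x y \<or> lt y x"
proof -
  assume c: "x \<in> carrier G" "y \<in> carrier G" "x \<noteq> y"
  let ?e = "inv x \<otimes> y"
  have ec: "?e \<in> carrier G" using c by simp
  have "?e \<noteq> \<one>" using c inv_solve_left[of \<one> x y] by auto
  then have "?e \<in> P \<or> ?e \<in> m_inv G ` P" using P_cover ec by blast
  then show ?thesis
  proof
    assume "?e \<in> P" then show ?thesis unfolding lt_def by simp
  next
    assume "?e \<in> m_inv G ` P"
    then obtain p where p: "p \<in> P" "?e = inv p" by blast
    have "inv y \<otimes> x = inv ?e" using c by (simp add: inv_mult_group)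
    then have "inv y \<otimes> x = p" using p P_sub by auto
    then show ?thesis unfolding lt_def using p by simp
  qed
qed

lemma fac_nt: "\<exists>e\<in>fac f. e \<noteq> \<one>"
proof (cases f)
  case True
  have "\<exists>e\<in>A. e \<noteq> \<one>" using Ant subgroup.one_closed[OF subA] by blast
  then show ?thesis using True by (simp add: fac_def)
next
  case False
  have "\<exists>e\<in>B. e \<noteq> \<one>" using Bnt subgroup.one_closed[OF subB] by blast
  then show ?thesis using False by (simp add: fac_def)
qed

lemma P_ne: "\<exists>p. p \<in> P"
proof -
  obtain e where e: "e \<in> fac True" "e \<noteq> \<one>" using fac_nt by blast
  then have "e \<in> carrier G" using fac_carrier by blast
  then show ?thesis using P_cover e by auto
qed

lemma upper: "finite F \<Longrightarrow> F \<subseteq> carrier G \<Longrightarrow> \<exists>d\<in>carrier G. \<forall>f\<in>F. lt f d"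
proof -
  assume F: "finite F" "F \<subseteq> carrier G"
  have "\<exists>M\<in>carrier G. \<forall>f\<in>F. f = M \<or> lt f M" using F
  proof (induction F rule: finite_induct)
    case empty then show ?case using one_closed by blast
  next
    case (insert x F)
    then obtain M where M: "M \<in> carrier G" "\<forall>f\<in>F. f = M \<or> lt f M" by auto
    have xc: "x \<in> carrier G" using insert by auto
    show ?case
    proof (cases "lt M x")
      case True
      have "f = x \<or> lt f x" if f: "f \<in> insert x F" for f
      proof (cases "f = x")
        case False
        then have fF: "f \<in> F" using f by blast
        then have fc: "f \<in> carrier G" using insert.prems by blast
        show ?thesis
        proof (cases "f = M")
          case True then show ?thesis using \<open>lt M x\<close> by simp
        next
          case False
          then have "lt f M" using M fF by blast
          then show ?thesis using lt_trans[OF fc M(1) xc] \<open>lt M x\<close> by blast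
        qed
      qed simp
      then have "\<forall>f\<in>insert x F. f = x \<or> lt f x" by blast
      then show ?thesis using xc by blast
    next
      case False
      then have "x = M \<or> lt x M" using lt_total[OF xc M(1)] by auto
      then show ?thesis using M by blast
    qed
  qed
  then obtain M where M: "M \<in> carrier G" "\<forall>f\<in>F. f = M \<or> lt f M" by blast
  obtain p where p: "p \<in> P" using P_ne by blast
  have pc: "p \<in> carrier G" using p P_sub by blast
  have "lt M (M \<otimes> p)" unfolding lt_def using M pc p by (simp add: m_assoc[symmetric])
  have "lt f (M \<otimes> p)" if f: "f \<in> F" for f
  proof (cases "f = M")
    case True then show ?thesis using \<open>lt M (M \<otimes> p)\<close> by simp
  next
    case False
    then have "lt f M" using M f by blast
    moreover have "f \<in> carrier G" using f F by blast
    ultimately show ?thesis using lt_trans[of f M "M \<otimes> p"] \<open>lt M (M \<otimes> p)\<close> M pc by simp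
  qed
  then have "\<forall>f\<in>F. lt f (M \<otimes> p)" by blast
  then show ?thesis using M pc by blast
qed

lemma P_pow: "p \<in> P \<Longrightarrow> p [^] (Suc n) \<in> P"
proof (induction n)
  case 0 then show ?case using P_sub by auto
next
  case (Suc n)
  have "p [^] Suc (Suc n) = p [^] (Suc n) \<otimes> p" by (rule nat_pow_Suc)
  moreover have "p [^] Suc n \<otimes> p \<in> P" using P_mult Suc by blast
  ultimately show ?case by (simp only:)
qed

lemma torsion: "x \<in> carrier G \<Longrightarrow> x \<noteq> \<one> \<Longrightarrow> n \<ge> 1 \<Longrightarrow> x [^] (n::nat) \<noteq> \<one>"
proof -
  assume a: "x \<in> carrier G" "x \<noteq> \<one>" "n \<ge> 1"
  then obtain m where n: "n = Suc m" by (cases n) auto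
  have "x \<in> P \<or> x \<in> m_inv G ` P" using P_cover a by blast
  then show ?thesis
  proof
    assume "x \<in> P" then show ?thesis using P_pow[of x m] n one_notP by auto
  next
    assume "x \<in> m_inv G ` P"
    then obtain p where p: "p \<in> P" "x = inv p" by blast
    have pc: "p \<in> carrier G" using p P_sub by blast
    have "x [^] n = inv (p [^] n)" using p pc nat_pow_inv by simp
    moreover have "p [^] n \<in> P" using P_pow p n by simp
    ultimately show ?thesis using one_notP pc by auto
  qed
qed

lemma unbounded: "m \<in> carrier G \<Longrightarrow> \<exists>x\<in>LS f. lt m x"
proof -
  assume m: "m \<in> carrier G"
  obtain e where e: "e \<in> fac f" "e \<noteq> \<one>" using fac_nt by blast
  have ec: "e \<in> carrier G" using e fac_carrier by blast
  obtain z where z: "z \<in> carrier G" "\<forall>w\<in>{m, inv e \<otimes> m, \<one>}. lt w z"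
    using upper[of "{m, inv e \<otimes> m, \<one>}"] m ec by auto
  have "z \<noteq> \<one>" using z lt_irrefl by auto
  then have "z \<in> LS True \<or> z \<in> LS False" using LS_cover z by blast
  then have "z \<in> LS f \<or> z \<in> LS (\<not> f)" by (cases f) auto
  then show ?thesis
  proof
    assume "z \<in> LS f" then show ?thesis using z by blast
  next
    assume zz: "z \<in> LS (\<not> f)"
    have "e \<otimes> z \<in> LS f" using LS_lmul[OF zz e] .
    moreover have "lt (e \<otimes> (inv e \<otimes> m)) (e \<otimes> z)" using z lt_left[of e "inv e \<otimes> m" z] ec m by simp
    then have "lt m (e \<otimes> z)" using ec m by (simp add: m_assoc[symmetric])
    ultimately show ?thesis by blast
  qed
qed

lemma one_Sb: "\<one> \<in> Sb \<one> R"
  unfolding Sb_def using wl_one by simp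

lemma Sb_fin: "finite (Sb c R)" if "c \<in> carrier G"
proof -
  have "Sb c R \<subseteq> (\<lambda>k. c \<otimes> inv k) ` {k \<in> carrier G. wl k \<le> R}"
  proof
    fix z assume z: "z \<in> Sb c R"
    then have zc: "z \<in> carrier G" unfolding Sb_def by simp
    have "z = c \<otimes> inv (inv z \<otimes> c)" using zc that by (simp add: inv_mult_group m_assoc[symmetric])
    then show "z \<in> (\<lambda>k. c \<otimes> inv k) ` {k \<in> carrier G. wl k \<le> R}" using z zc that unfolding Sb_def by auto
  qed
  then show ?thesis using ball_fin finite_subset by blast
qed

lemma lcancel: "a \<in> carrier G \<Longrightarrow> b \<in> carrier G \<Longrightarrow> c \<in> carrier G \<Longrightarrow> a \<otimes> b = a \<otimes> c \<Longrightarrow> b = c"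
proof -
  assume c: "a \<in> carrier G" "b \<in> carrier G" "c \<in> carrier G" and e: "a \<otimes> b = a \<otimes> c"
  have "inv a \<otimes> (a \<otimes> b) = inv a \<otimes> (a \<otimes> c)" using e by simp
  then show "b = c" using c by (simp add: m_assoc[symmetric])
qed

lemma avoid_coset:
  assumes Y: "Y \<subseteq> carrier G" and x0: "x0 \<in> carrier G" and nopow: "\<forall>n\<ge>1. x0 [^] (n::nat) \<notin> generate G Y"
  shows "\<exists>x\<in>carrier G. \<forall>h\<in>generate G Y. x \<otimes> h \<notin> Sb \<one> R"
proof (rule ccontr)
  let ?H = "generate G Y" and ?K = "Sb \<one> R"
  have sg: "subgroup ?H G" using generate_is_subgroup[OF Y] .
  assume na: "\<not> ?thesis"
  have ex: "\<forall>i::nat. \<exists>h. h \<in> ?H \<and> x0 [^] i \<otimes> h \<in> ?K"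
  proof
    fix i :: nat
    have "x0 [^] i \<in> carrier G" using x0 by simp
    then have "\<not> (\<forall>h\<in>?H. x0 [^] i \<otimes> h \<notin> ?K)" using na by blast
    then show "\<exists>h. h \<in> ?H \<and> x0 [^] i \<otimes> h \<in> ?K" by blast
  qed
  obtain hh :: "nat \<Rightarrow> 'a" where hh0: "\<forall>i. hh i \<in> ?H \<and> x0 [^] i \<otimes> hh i \<in> ?K" using choice[OF ex] by blast
  then have hh: "\<And>i. hh i \<in> ?H" "\<And>i. x0 [^] i \<otimes> hh i \<in> ?K" by blast+
  let ?phi = "\<lambda>i::nat. x0 [^] i \<otimes> hh i"
  have fK: "finite ?K" using Sb_fin by simp
  have sub: "?phi ` {0..card ?K} \<subseteq> ?K" using hh(2) by blast
  have "\<not> inj_on ?phi {0..card ?K}"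
  proof
    assume "inj_on ?phi {0..card ?K}"
    then have "card {0..card ?K} \<le> card ?K" using card_inj_on_le[OF _ sub fK] by blast
    then show False by simp
  qed
  then obtain i j where ij: "i \<noteq> j" "?phi i = ?phi j" unfolding inj_on_def by blast
  have main: "?phi i = ?phi j \<Longrightarrow> i < j \<Longrightarrow> False" for i j
  proof -
    assume e: "?phi i = ?phi j" and l: "i < j"
    have hc: "hh i \<in> carrier G" "hh j \<in> carrier G" using hh(1) subgroup.mem_carrier[OF sg] by auto
    have pc: "x0 [^] i \<in> carrier G" "x0 [^] (j - i) \<in> carrier G" using x0 by simp_all
    have "x0 [^] i \<otimes> x0 [^] (j - i) = x0 [^] (i + (j - i))" using nat_pow_mult[OF x0] by blast
    then have "x0 [^] j = x0 [^] i \<otimes> x0 [^] (j - i)" using l by simp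
    then have "x0 [^] i \<otimes> hh i = x0 [^] i \<otimes> (x0 [^] (j - i) \<otimes> hh j)" using e pc hc by (simp add: m_assoc)
    then have e2: "hh i = x0 [^] (j - i) \<otimes> hh j" using lcancel[OF pc(1) hc(1) m_closed[OF pc(2) hc(2)]] by blast
    have "x0 [^] (j - i) = hh i \<otimes> inv (hh j)" using inv_solve_right[OF pc(2) hc(1) hc(2)] e2 by simp
    moreover have "hh i \<otimes> inv (hh j) \<in> ?H" using hh(1) subgroup.m_closed[OF sg] subgroup.m_inv_closed[OF sg] by blast
    moreover have "j - i \<ge> 1" using l by simp
    ultimately show False using nopow by metis
  qed
  from ij(1) have "i < j \<or> j < i" by arith
  then show False using main[of i j] main[of j i] ij(2) by auto
qed

lemma inv_cancel_helper: "c \<in> carrier G \<Longrightarrow> u \<in> carrier G \<Longrightarrow> h \<in> carrier G \<Longrightarrow> inv c \<otimes> (c \<otimes> u \<otimes> h) = u \<otimes> h"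
  by (simp add: m_assoc[symmetric])

lemma coset_sides:
  assumes Y: "Y \<subseteq> carrier G" and YR: "\<forall>y\<in>Y. wl y \<le> R \<and> wl (inv y) \<le> R"
    and x0: "x0 \<in> carrier G" and nopow: "\<forall>n\<ge>1. x0 [^] (n::nat) \<notin> generate G Y"
    and c: "c \<in> carrier G"
  shows "\<exists>g1\<in>carrier G. \<exists>g2\<in>carrier G. \<forall>h\<in>generate G Y.
     inv c \<otimes> (g1 \<otimes> h) \<in> LS True \<and> inv c \<otimes> (g2 \<otimes> h) \<in> LS False"
proof -
  let ?H = "generate G Y"
  have sg: "subgroup ?H G" using generate_is_subgroup[OF Y] .
  have Hc: "h \<in> ?H \<Longrightarrow> h \<in> carrier G" for h using subgroup.mem_carrier[OF sg] .
  obtain x where x: "x \<in> carrier G" "\<forall>h\<in>?H. x \<otimes> h \<notin> Sb \<one> R"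
    using avoid_coset[OF Y x0 nopow] by blast
  have one: "\<one> \<in> ?H" using subgroup.one_closed[OF sg] .
  have sc: "x \<otimes> h \<in> LS True \<longleftrightarrow> x \<in> LS True" if h: "h \<in> ?H" for h
  proof -
    have "(x \<otimes> \<one> \<otimes> h \<in> LS True) = (x \<otimes> \<one> \<in> LS True)" using side_const[OF Y YR x(1) x(2) h] one by blast
    then show ?thesis using x(1) by simp
  qed
  have ne: "h \<in> ?H \<Longrightarrow> x \<otimes> h \<noteq> \<one>" for h using x(2) one_Sb[of R] by auto
  obtain a0 where a0: "a0 \<in> fac True" "a0 \<noteq> \<one>" using fac_nt by blast
  obtain b0 where b0: "b0 \<in> fac False" "b0 \<noteq> \<one>" using fac_nt by blast
  have a0c: "a0 \<in> carrier G" and b0c: "b0 \<in> carrier G" using a0 b0 fac_carrier by auto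
  show ?thesis
  proof (cases "x \<in> LS True")
    case True
    then have T: "h \<in> ?H \<Longrightarrow> x \<otimes> h \<in> LS True" for h using sc by blast
    have "inv c \<otimes> (c \<otimes> x \<otimes> h) \<in> LS True \<and> inv c \<otimes> (c \<otimes> (b0 \<otimes> x) \<otimes> h) \<in> LS False" if h: "h \<in> ?H" for h
    proof -
      have "inv c \<otimes> (c \<otimes> (b0 \<otimes> x) \<otimes> h) = b0 \<otimes> (x \<otimes> h)"
        using inv_cancel_helper[of c "b0 \<otimes> x" h] c b0c x Hc[OF h] by (simp add: m_assoc)
      moreover have "b0 \<otimes> (x \<otimes> h) \<in> LS False" using LS_lmul[of "x \<otimes> h" False b0] T[OF h] b0 by simp
      ultimately show ?thesis using inv_cancel_helper[of c x h] c x Hc[OF h] T[OF h] by simp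
    qed
    then show ?thesis using c x b0c by (intro bexI[of _ "c \<otimes> x"] bexI[of _ "c \<otimes> (b0 \<otimes> x)"]) auto
  next
    case False
    then have F: "h \<in> ?H \<Longrightarrow> x \<otimes> h \<in> LS False" for h using sc ne LS_cover x(1) Hc by blast
    have "inv c \<otimes> (c \<otimes> (a0 \<otimes> x) \<otimes> h) \<in> LS True \<and> inv c \<otimes> (c \<otimes> x \<otimes> h) \<in> LS False" if h: "h \<in> ?H" for h
    proof -
      have "inv c \<otimes> (c \<otimes> (a0 \<otimes> x) \<otimes> h) = a0 \<otimes> (x \<otimes> h)"
        using inv_cancel_helper[of c "a0 \<otimes> x" h] c a0c x Hc[OF h] by (simp add: m_assoc)
      moreover have "a0 \<otimes> (x \<otimes> h) \<in> LS True" using LS_lmul[of "x \<otimes> h" True a0] F[OF h] a0 by simp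
      ultimately show ?thesis using inv_cancel_helper[of c x h] c x Hc[OF h] F[OF h] by simp
    qed
    then show ?thesis using c x a0c by (intro bexI[of _ "c \<otimes> (a0 \<otimes> x)"] bexI[of _ "c \<otimes> x"]) auto
  qed
qed

lemma swamp:
  assumes Y: "Y \<subseteq> carrier G" and YR: "\<forall>y\<in>Y. wl y \<le> RH \<and> wl (inv y) \<le> RH"
    and x0: "x0 \<in> carrier G" and nopow: "\<forall>n\<ge>1. x0 [^] (n::nat) \<notin> generate G Y"
  shows "\<exists>S. negative_swamp G Xg P (generate G Y) r S"
proof -
  let ?H = "generate G Y"
  define R where "R = max r RH"
  have YR': "\<forall>y\<in>Y. wl y \<le> R \<and> wl (inv y) \<le> R" using YR unfolding R_def by (meson le_trans max.cobounded2)
  let ?K = "{k \<in> carrier G. wl k \<le> R}"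
  have fin: "finite (m_inv G ` ?K)" using ball_fin by simp
  have "m_inv G ` ?K \<subseteq> carrier G" by auto
  then obtain d where d: "d \<in> carrier G" "\<forall>f\<in>m_inv G ` ?K. lt f d" using upper[OF fin] by blast
  define c where "c = inv d"
  have cc: "c \<in> carrier G" unfolding c_def using d by simp
  have rR: "r \<le> R" unfolding R_def by simp
  have negS: "Sb c R \<subseteq> m_inv G ` P"
  proof
    fix z assume z: "z \<in> Sb c R"
    then have zc: "z \<in> carrier G" and k: "inv z \<otimes> c \<in> ?K" using cc unfolding Sb_def by auto
    then have "lt (inv (inv z \<otimes> c)) d" using d by blast
    then have "inv (inv (inv z \<otimes> c)) \<otimes> d \<in> P" unfolding lt_def .
    moreover have "inv (inv (inv z \<otimes> c)) \<otimes> d = inv z" using zc d cc unfolding c_def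
      by (simp add: m_assoc)
    ultimately have "inv z \<in> P" by simp
    then show "z \<in> m_inv G ` P" using zc by (intro image_eqI[of z "m_inv G" "inv z"]) auto
  qed
  obtain u0 where u0: "u0 \<in> LS True" "lt d u0" using unbounded d by blast
  obtain v0 where v0: "v0 \<in> LS False" "lt d v0" using unbounded d by blast
  have u0c: "u0 \<in> carrier G" and v0c: "v0 \<in> carrier G" using u0 v0 LS_carrier by auto
  have uP: "c \<otimes> u0 \<in> P" and vP: "c \<otimes> v0 \<in> P" using u0 v0 unfolding lt_def c_def by auto
  have "inv c \<otimes> (c \<otimes> u0) = u0" "inv c \<otimes> (c \<otimes> v0) = v0" using cc u0c v0c by (simp_all add: m_assoc[symmetric])
  then have "inv c \<otimes> (c \<otimes> u0) \<in> LS True" "inv c \<otimes> (c \<otimes> v0) \<notin> LS True"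
    using u0 v0 LS_notin[of v0 True] by auto
  then have "r_disconnects G Xg r (Sb c R) {c \<otimes> u0} {c \<otimes> v0}" using disc[OF cc rR, of "{c \<otimes> u0}" "{c \<otimes> v0}"] by blast
  then have cone_d: "r_disconnects_cone G Xg r (Sb c R) P" unfolding r_disconnects_cone_def using uP vP by blast
  obtain g1 g2 where g: "g1 \<in> carrier G" "g2 \<in> carrier G"
    "\<forall>h\<in>?H. inv c \<otimes> (g1 \<otimes> h) \<in> LS True \<and> inv c \<otimes> (g2 \<otimes> h) \<in> LS False"
    using coset_sides[OF Y YR' x0 nopow cc] by blast
  have "\<forall>x\<in>g1 <# ?H. inv c \<otimes> x \<in> LS True \<or> x \<in> Sb c R" using g unfolding l_coset_def by auto
  moreover have "\<forall>y\<in>g2 <# ?H. inv c \<otimes> y \<notin> LS True \<or> y \<in> Sb c R"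
    using g LS_notin[of _ True] unfolding l_coset_def by auto
  ultimately have "r_disconnects G Xg r (Sb c R) (g1 <# ?H) (g2 <# ?H)" using disc[OF cc rR, of "g1 <# ?H" "g2 <# ?H"] by blast
  then show ?thesis unfolding negative_swamp_def using negS cone_d g(1,2) by blast
qed

end

context fpx
begin
lemma wl_letter: "y \<in> Lt \<Longrightarrow> wl y \<le> 1"
proof -
  assume y: "y \<in> Lt"
  then have "wl (foldr (\<otimes>) [y] \<one>) \<le> length [y]" using wl_le[of "[y]"] by simp
  moreover have "foldr (\<otimes>) [y] \<one> = y" using y Lt_carrier by auto
  ultimately show ?thesis by simp
qed
end

context fpP
begin

lemma swamp_fac:
  assumes Y: "Y \<subseteq> Xg" and gY: "generate G Y = fac f"
  shows "\<exists>S. negative_swamp G Xg P (fac f) r S"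
proof -
  have Yc: "Y \<subseteq> carrier G" using Y Xsub by blast
  have YR: "\<forall>y\<in>Y. wl y \<le> 1 \<and> wl (inv y) \<le> 1" using Y wl_letter by blast
  obtain x0 where x0: "x0 \<in> fac (\<not> f)" "x0 \<noteq> \<one>" using fac_nt by blast
  have x0c: "x0 \<in> carrier G" using x0 fac_carrier by blast
  have "\<forall>n\<ge>1. x0 [^] (n::nat) \<notin> generate G Y"
  proof (intro allI impI)
    fix n :: nat assume n: "n \<ge> 1"
    show "x0 [^] n \<notin> generate G Y"
    proof
      assume "x0 [^] n \<in> generate G Y"
      then have "x0 [^] n \<in> fac f" using gY by simp
      moreover have "x0 [^] n \<in> fac (\<not> f)" using sub_pow_closed[OF sub_fac x0(1)] .
      ultimately have "x0 [^] n \<in> A" "x0 [^] n \<in> B" by (cases f; simp add: fac_def)+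
      then have "x0 [^] n = \<one>" using AB_inter by blast
      then show False using torsion[OF x0c x0(2) n] by blast
    qed
  qed
  then show ?thesis using swamp[OF Yc YR x0c] gY by simp
qed

lemma cyc_nopow:
  assumes g: "g \<in> carrier G"
  shows "\<exists>x0\<in>carrier G. \<forall>n\<ge>1. x0 [^] (n::nat) \<notin> generate G {g}"
proof (rule ccontr)
  assume na: "\<not> ?thesis"
  obtain a0 where a0: "a0 \<in> fac True" "a0 \<noteq> \<one>" using fac_nt by blast
  obtain b0 where b0: "b0 \<in> fac False" "b0 \<noteq> \<one>" using fac_nt by blast
  have a0c: "a0 \<in> carrier G" and b0c: "b0 \<in> carrier G" using a0 b0 fac_carrier by auto
  obtain n where n: "n \<ge> 1" "a0 [^] (n::nat) \<in> generate G {g}" using na a0c by blast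
  obtain m where m: "m \<ge> 1" "b0 [^] (m::nat) \<in> generate G {g}" using na b0c by blast
  let ?p = "a0 [^] n" and ?q = "b0 [^] m"
  obtain k :: int where k: "?p = g [^] k" using n(2) generate_pow[OF g] by blast
  obtain l :: int where l: "?q = g [^] l" using m(2) generate_pow[OF g] by blast
  have comm: "?p \<otimes> ?q = ?q \<otimes> ?p"
    using k l int_pow_mult[OF g, of k l] int_pow_mult[OF g, of l k] by (simp add: add.commute)
  have pA: "?p \<in> A" and qB: "?q \<in> B" using sub_pow_closed[OF subA] sub_pow_closed[OF subB] a0 b0
    by (auto simp: fac_def)
  have pc: "?p \<in> carrier G" and qc: "?q \<in> carrier G" using a0c b0c by auto
  have pn: "?p \<noteq> \<one>" and qn: "?q \<noteq> \<one>" using torsion a0c a0 b0c b0 n m by auto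
  let ?ws = "[(True, ?p), (False, ?q), (True, inv ?p), (False, inv ?q)]"
  have "altw good ?ws" using pA qB pn qn pc qc subgroup.m_inv_closed[OF subA pA] subgroup.m_inv_closed[OF subB qB]
    by (simp add: good_def fac_def)
  moreover have "prd ?ws = \<one>"
  proof -
    have "prd ?ws = ?p \<otimes> (?q \<otimes> (inv ?p \<otimes> inv ?q))" using pc qc by simp
    also have "\<dots> = (?p \<otimes> ?q) \<otimes> inv ?p \<otimes> inv ?q" using pc qc by (simp add: m_assoc)
    also have "\<dots> = (?q \<otimes> ?p) \<otimes> inv ?p \<otimes> inv ?q" using comm by simp
    also have "\<dots> = \<one>" using pc qc by (simp add: m_assoc)
    finally show ?thesis .
  qed
  ultimately show False using nontriv by blast
qed

lemma swamp_cyc: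
  assumes g: "g \<in> carrier G"
  shows "\<exists>S. negative_swamp G Xg P (generate G {g}) r S"
proof -
  obtain x0 where x0: "x0 \<in> carrier G" "\<forall>n\<ge>1. x0 [^] (n::nat) \<notin> generate G {g}"
    using cyc_nopow[OF g] by blast
  have YR: "\<forall>y\<in>{g}. wl y \<le> wl g + wl (inv g) \<and> wl (inv y) \<le> wl g + wl (inv g)" by simp
  show ?thesis using swamp[OF _ YR x0(1) x0(2)] g by simp
qed

end

theorem corollary5p10:
  fixes G :: "'a monoid" and A B :: "'a set"
  assumes "group G"
    and "internal_free_product G A B"
    and "A \<noteq> {\<one>\<^bsub>G\<^esub>}" and "B \<noteq> {\<one>\<^bsub>G\<^esub>}"
    and "finitely_generated (G\<lparr>carrier := A\<rparr>)" and "finitely_generated (G\<lparr>carrier := B\<rparr>)"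
    and "left_orderable (G\<lparr>carrier := A\<rparr>)" and "left_orderable (G\<lparr>carrier := B\<rparr>)"
  shows "hucha G ({A, B} \<union> {generate G {g} | g. g \<in> carrier G})"
proof -
  interpret F: fpc G A B using assms(1,2) by (intro fpc.intro fpc_axioms.intro)
  obtain XA where XA: "finite XA" "XA \<subseteq> A" "generate (G\<lparr>carrier := A\<rparr>) XA = A"
    using assms(5) unfolding finitely_generated_def by auto
  obtain XB where XB: "finite XB" "XB \<subseteq> B" "generate (G\<lparr>carrier := B\<rparr>) XB = B"
    using assms(6) unfolding finitely_generated_def by auto
  have gA: "generate G XA = A" using XA F.generate_consistent[OF XA(2) F.subA] by simp
  have gB: "generate G XB = B" using XB F.generate_consistent[OF XB(2) F.subB] by simp
  define Xg where "Xg = XA \<union> XB"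
  have Ac: "A \<subseteq> carrier G" and Bc: "B \<subseteq> carrier G"
    using subgroup.subset[OF F.subA] subgroup.subset[OF F.subB] by auto
  have Xsub: "Xg \<subseteq> carrier G" using XA XB Ac Bc unfolding Xg_def by auto
  have "A \<union> B \<subseteq> generate G Xg"
    using F.mono_generate[of XA Xg] F.mono_generate[of XB Xg] gA gB unfolding Xg_def by auto
  then have "generate G (A \<union> B) \<subseteq> generate G Xg"
    using F.generate_subgroup_incl F.generate_is_subgroup[OF Xsub] by blast
  then have Xgen: "generate G Xg = carrier G" using F.genAB F.generate_incl[OF Xsub] by blast
  interpret X: fpx G A B Xg
    using XA XB Xsub Xgen unfolding Xg_def by (intro fpx.intro fpx_axioms.intro F.fpc_axioms) auto
  show ?thesis unfolding hucha_def
  proof (rule exI[of _ Xg], intro conjI allI impI ballI)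
    show "finite Xg" using XA XB Xg_def by simp
    show "Xg \<subseteq> carrier G" using Xsub .
    show "generate G Xg = carrier G" using Xgen .
  next
    fix P H and r :: nat
    assume P: "positive_cone G P" and H: "H \<in> {A, B} \<union> {generate G {g} | g. g \<in> carrier G}" and r: "r > 0"
    interpret Q: fpP G A B Xg P using P assms(3,4) by (intro fpP.intro fpP_axioms.intro X.fpx_axioms)
    show "\<exists>S. negative_swamp G Xg P H r S"
    proof -
      have "H = A \<or> H = B \<or> (\<exists>g\<in>carrier G. H = generate G {g})" using H by blast
      moreover have "\<exists>S. negative_swamp G Xg P A r S"
        using Q.swamp_fac[of XA True r] gA unfolding Xg_def F.fac_def by simp
      moreover have "\<exists>S. negative_swamp G Xg P B r S"
        using Q.swamp_fac[of XB False r] gB unfolding Xg_def F.fac_def by simp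
      moreover have "\<exists>S. negative_swamp G Xg P (generate G {g}) r S" if "g \<in> carrier G" for g
        using Q.swamp_cyc[OF that] .
      ultimately show ?thesis by blast
    qed
  qed
qed

end
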